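(* Let $\delta>0$. For any $m>64\pi^2$, $\kappa>0$ and $\mu^\star>0$ one can find $\varepsilon\in(0,1)$, $\ell>0$ and $\gamma>0$ such that: $\ell\ge\delta$; $$-2^5\xi^2+(\mu^\star\varepsilon+6\ell)\xi-(\gamma+1)\ell\le0\quad\text{for all }\xi\in\mathbb{R};$$ $2\gamma^2-3\ell\ge0$; $e^{\varepsilon}<\frac{1+2\kappa}{1+\kappa}$; $e^{(\gamma+1)\varepsilon}(1+3\varepsilon^3)<\frac{m}{64\pi^2}$; and $$g(t):=e^{(\ell-\delta)t}\big(1+(\varepsilon-\ell t)^3\big)\ge1+\varepsilon^3\quad\text{for all }t\in(0,\varepsilon/\ell).$$ *)

theory Defs
  imports Complex_Main
begin

end

theory Submission
  imports Defs
begin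

lemma quad_aux:
  fixes b c x :: real
  assumes "b^2 \<le> 128 * c"
  shows "- (2^5) * x\<^sup>2 + b * x - c \<le> 0"
proof -
  have "0 \<le> 32 * (x - b/64)^2" by simp
  also have "32 * (x - b/64)^2 = 32*x^2 - b*x + b^2/128" by (simp add: power2_eq_square algebra_simps)
  finally show ?thesis using assms by simp
qed

lemma g_aux:
  fixes e s :: real
  assumes "0 < s" "s < e" "e < 2/5"
  shows "(1 + s/2) * (1 + (e - s)^3) \<ge> 1 + e^3"
proof -
  have d: "e^3 - (e-s)^3 = s * (3*e^2 - 3*e*s + s^2)" by (simp add: power3_eq_cube power2_eq_square algebra_simps)
  have "s*s \<le> (3*e)*s" using assms by (intro mult_right_mono) auto
  then have "3*e^2 - 3*e*s + s^2 \<le> 3*e^2" by (simp add: power2_eq_square)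
  also have "3*e^2 \<le> 1/2"
  proof -
    have "e*e \<le> (2/5)*(2/5)" using assms by (intro mult_mono) auto
    then show ?thesis by (simp add: power2_eq_square)
  qed
  finally have h: "3*e^2 - 3*e*s + s^2 \<le> 1/2" .
  have "s * (3*e^2 - 3*e*s + s^2) \<le> s * (1/2)" using h assms(1) by (intro mult_left_mono) auto
  then have "e^3 - (e-s)^3 \<le> s/2" using d by simp
  moreover have "0 \<le> (s/2) * (e-s)^3" using assms by simp
  ultimately show ?thesis by (simp add: algebra_simps)
qed

theorem lemma3p4:
  fixes \<delta> :: real
  assumes "\<delta> > 0"
  shows "\<forall>m \<kappa> \<mu>s :: real. m > 64 * pi\<^sup>2 \<longrightarrow> \<kappa> > 0 \<longrightarrow> \<mu>s > 0 \<longrightarrow>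
    (\<exists>\<epsilon> l \<gamma> :: real. 0 < \<epsilon> \<and> \<epsilon> < 1 \<and> l > 0 \<and> \<gamma> > 0 \<and>
      l \<ge> \<delta> \<and>
      (\<forall>\<xi> :: real. - (2^5) * \<xi>\<^sup>2 + (\<mu>s * \<epsilon> + 6 * l) * \<xi> - (\<gamma> + 1) * l \<le> 0) \<and>
      2 * \<gamma>\<^sup>2 - 3 * l \<ge> 0 \<and>
      exp \<epsilon> < (1 + 2 * \<kappa>) / (1 + \<kappa>) \<and>
      exp ((\<gamma> + 1) * \<epsilon>) * (1 + 3 * \<epsilon> ^ 3) < m / (64 * pi\<^sup>2) \<and>
      (\<forall>t. 0 < t \<and> t < \<epsilon> / l \<longrightarrow>
         exp ((l - \<delta>) * t) * (1 + (\<epsilon> - l * t) ^ 3) \<ge> 1 + \<epsilon> ^ 3))"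
proof (intro allI impI)
  fix m \<kappa> \<mu>s :: real
  assume m: "m > 64 * pi\<^sup>2" and k: "\<kappa> > 0" and mu: "\<mu>s > 0"
  define l where "l = 2 * \<delta>"
  define \<gamma> where "\<gamma> = 1 + 3 * \<delta> + (\<mu>s + 12 * \<delta>)^2 / (256 * \<delta>)"
  have dpos: "\<delta> > 0" by fact
  have g1: "\<gamma> \<ge> 1" and g3: "\<gamma> \<ge> 3 * \<delta>" unfolding \<gamma>_def using dpos by auto
  have M1: "m / (64 * pi\<^sup>2) > 1" using m by (simp add: pi_gt_zero)
  have K1: "(1 + 2 * \<kappa>) / (1 + \<kappa>) > 1" using k by simp
  have t1: "((\<lambda>e. exp e) \<longlongrightarrow> exp 0) (at_right (0::real))"
    by (intro tendsto_intros)
  have t2: "((\<lambda>e. exp ((\<gamma> + 1) * e) * (1 + 3 * e ^ 3)) \<longlongrightarrow> exp ((\<gamma> + 1) * 0) * (1 + 3 * 0 ^ 3)) (at_right (0::real))"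
    by (intro tendsto_intros)
  have ev: "\<forall>\<^sub>F e in at_right (0::real). 0 < e \<and> e < 2/5 \<and> exp e < (1 + 2 * \<kappa>) / (1 + \<kappa>)
      \<and> exp ((\<gamma> + 1) * e) * (1 + 3 * e ^ 3) < m / (64 * pi\<^sup>2)"
  proof (intro eventually_conj)
    show "\<forall>\<^sub>F e in at_right (0::real). 0 < e" by (simp add: eventually_at_right_less)
    show "\<forall>\<^sub>F e in at_right (0::real). e < 2/5"
      using eventually_at_right_field by (metis (mono_tags, lifting) eventually_at_right zero_less_divide_iff zero_less_numeral)
    show "\<forall>\<^sub>F e in at_right (0::real). exp e < (1 + 2 * \<kappa>) / (1 + \<kappa>)"
      using order_tendstoD(2)[OF t1] K1 by simp
    show "\<forall>\<^sub>F e in at_right (0::real). exp ((\<gamma> + 1) * e) * (1 + 3 * e ^ 3) < m / (64 * pi\<^sup>2)"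
      using order_tendstoD(2)[OF t2] M1 by simp
  qed
  then obtain \<epsilon> where e: "0 < \<epsilon>" "\<epsilon> < 2/5" "exp \<epsilon> < (1 + 2 * \<kappa>) / (1 + \<kappa>)"
      "exp ((\<gamma> + 1) * \<epsilon>) * (1 + 3 * \<epsilon> ^ 3) < m / (64 * pi\<^sup>2)"
    using eventually_happens'[OF trivial_limit_at_right_real] by blast
  show "\<exists>\<epsilon> l \<gamma> :: real. 0 < \<epsilon> \<and> \<epsilon> < 1 \<and> l > 0 \<and> \<gamma> > 0 \<and>
      l \<ge> \<delta> \<and>
      (\<forall>\<xi> :: real. - (2^5) * \<xi>\<^sup>2 + (\<mu>s * \<epsilon> + 6 * l) * \<xi> - (\<gamma> + 1) * l \<le> 0) \<and>
      2 * \<gamma>\<^sup>2 - 3 * l \<ge> 0 \<and>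
      exp \<epsilon> < (1 + 2 * \<kappa>) / (1 + \<kappa>) \<and>
      exp ((\<gamma> + 1) * \<epsilon>) * (1 + 3 * \<epsilon> ^ 3) < m / (64 * pi\<^sup>2) \<and>
      (\<forall>t. 0 < t \<and> t < \<epsilon> / l \<longrightarrow>
         exp ((l - \<delta>) * t) * (1 + (\<epsilon> - l * t) ^ 3) \<ge> 1 + \<epsilon> ^ 3)"
  proof (intro exI conjI allI impI)
    show "0 < \<epsilon>" "\<epsilon> < 1" using e by auto
    show "l > 0" "\<delta> \<le> l" using dpos l_def by auto
    show "\<gamma> > 0" using g1 by simp
    show "exp \<epsilon> < (1 + 2 * \<kappa>) / (1 + \<kappa>)" "exp ((\<gamma> + 1) * \<epsilon>) * (1 + 3 * \<epsilon> ^ 3) < m / (64 * pi\<^sup>2)"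
      using e by auto
    show "2 * \<gamma>\<^sup>2 - 3 * l \<ge> 0"
    proof -
      have "\<gamma>\<^sup>2 \<ge> \<gamma>" using g1 by (simp add: power2_eq_square)
      then show ?thesis using g3 l_def by simp
    qed
  next
    fix \<xi> :: real
    let ?b = "\<mu>s * \<epsilon> + 6 * l"
    have b0: "0 \<le> ?b" using mu e dpos l_def by simp
    have "\<mu>s * \<epsilon> \<le> \<mu>s * 1" using mu e by (intro mult_left_mono) auto
    then have b1: "?b \<le> \<mu>s + 12 * \<delta>" using l_def by simp
    have "?b^2 \<le> (\<mu>s + 12 * \<delta>)^2" using b0 b1 by (simp add: power_mono)
    also have "(\<mu>s + 12 * \<delta>)^2 = 128 * (2 * \<delta> * ((\<mu>s + 12 * \<delta>)^2 / (256 * \<delta>)))"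
      using dpos by (simp add: field_simps)
    also have "\<dots> \<le> 128 * ((\<gamma> + 1) * l)"
    proof -
      have "(\<mu>s + 12 * \<delta>)^2 / (256 * \<delta>) \<le> \<gamma> + 1" unfolding \<gamma>_def using dpos by simp
      then show ?thesis using dpos l_def by (simp add: pos_divide_le_eq mult.commute mult.left_commute)
    qed
    finally show "- (2^5) * \<xi>\<^sup>2 + ?b * \<xi> - (\<gamma> + 1) * l \<le> 0" by (rule quad_aux)
  next
    fix t :: real
    assume t: "0 < t \<and> t < \<epsilon> / l"
    define s where "s = l * t"
    have s: "0 < s" "s < \<epsilon>" using t dpos l_def s_def by (auto simp: field_simps)
    have lt: "(l - \<delta>) * t = s/2" using s_def l_def by simp
    have "1 + \<epsilon>^3 \<le> (1 + s/2) * (1 + (\<epsilon> - s)^3)" using g_aux s e by simp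
    also have "\<dots> \<le> exp (s/2) * (1 + (\<epsilon> - s)^3)"
      using s by (intro mult_right_mono) (auto simp: exp_ge_add_one_self)
    finally show "exp ((l - \<delta>) * t) * (1 + (\<epsilon> - l * t) ^ 3) \<ge> 1 + \<epsilon> ^ 3"
      unfolding lt s_def .
  qed
qed

end
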